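(* Let $K$ and $L$ be number fields (inside a fixed algebraic closure of $\mathbb{Q}$). Then \[\frac{1}{[\widetilde K\widetilde L:\mathbb{Q}]}\le \delta_{K,L}\le 1,\] where equality on the right holds if and only if $\widetilde K=\widetilde L$, and equality on the left holds if and only if $K=\mathbb{Q}$ or $L=\mathbb{Q}$.
   Context: $\widetilde E$ denotes the Galois closure of a number field $E$ over $\mathbb{Q}$, and $\widetilde K\widetilde L$ the compositum. $\delta_{K,L}:=\frac{2}{[\widetilde K\widetilde L:\mathbb{Q}]}+1-\frac{1}{[\widetilde K:\mathbb{Q}]}-\frac{1}{[\widetilde L:\mathbb{Q}]}$. *)

theory Defs
  imports Complex_Main "HOL-Computational_Algebra.Polynomial"
begin

text \<open>We work inside the algebraic closure of the rationals contained in the complex numbers.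
  Subfields of the complex numbers automatically contain the rationals.\<close>

definition qscale :: "rat \<Rightarrow> complex \<Rightarrow> complex" where
  "qscale r z = of_rat r * z"

definition is_subfield :: "complex set \<Rightarrow> bool" where
  "is_subfield F \<longleftrightarrow> 0 \<in> F \<and> 1 \<in> F \<and>
     (\<forall>x\<in>F. \<forall>y\<in>F. x + y \<in> F \<and> x * y \<in> F) \<and>
     (\<forall>x\<in>F. - x \<in> F) \<and> (\<forall>x\<in>F. x \<noteq> 0 \<longrightarrow> inverse x \<in> F)"

definition qdegree :: "complex set \<Rightarrow> nat" where
  "qdegree F = vector_space.dim qscale F"

definition number_field :: "complex set \<Rightarrow> bool" where
  "number_field F \<longleftrightarrow> is_subfield F \<and> (\<exists>B. finite B \<and> F \<subseteq> module.span qscale B)"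

definition normal_over_Q :: "complex set \<Rightarrow> bool" where
  "normal_over_Q F \<longleftrightarrow> (\<forall>x\<in>F. \<forall>p :: rat poly. irreducible p \<and> poly (map_poly of_rat p) x = 0 \<longrightarrow>
       (\<forall>y. poly (map_poly of_rat p) y = 0 \<longrightarrow> y \<in> F))"

definition galois_closure :: "complex set \<Rightarrow> complex set" where
  "galois_closure E = \<Inter>{F. E \<subseteq> F \<and> is_subfield F \<and> normal_over_Q F}"

definition compositum :: "complex set \<Rightarrow> complex set \<Rightarrow> complex set" where
  "compositum A B = \<Inter>{F. A \<union> B \<subseteq> F \<and> is_subfield F}"

definition delta :: "complex set \<Rightarrow> complex set \<Rightarrow> real" where
  "delta K L = 2 / real (qdegree (compositum (galois_closure K) (galois_closure L))) + 1
     - 1 / real (qdegree (galois_closure K)) - 1 / real (qdegree (galois_closure L))"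

end

theory Submission
  imports Defs "HOL-Computational_Algebra.Computational_Algebra" "HOL-Computational_Algebra.Field_as_Ring" "HOL-Computational_Algebra.Fundamental_Theorem_Algebra"
begin

lemma vs_qscale: "vector_space qscale"
  by unfold_locales (auto simp: qscale_def algebra_simps of_rat_add of_rat_mult)

interpretation Q: vector_space qscale by (rule vs_qscale)

lemma qscale_eq: "qscale c z = of_rat c * z" by (simp add: qscale_def)

definition fd :: "complex set \<Rightarrow> bool" where
  "fd V \<longleftrightarrow> (\<exists>B. finite B \<and> V \<subseteq> Q.span B)"

lemma qdegree_eq: "qdegree F = Q.dim F" by (simp add: qdegree_def)

lemma fd_basis:
  assumes "fd V"
  obtains B where "B \<subseteq> V" "Q.independent B" "V \<subseteq> Q.span B" "card B = Q.dim V" "finite B"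
proof -
  obtain W where W: "finite W" "V \<subseteq> Q.span W" using assms fd_def by auto
  obtain B where B: "B \<subseteq> V" "Q.independent B" "V \<subseteq> Q.span B" "card B = Q.dim V"
    using Q.basis_exists by blast
  have "finite B" using Q.independent_span_bound[OF W(1) B(2)] B(1) W(2) by auto
  then show ?thesis using B that by blast
qed

lemma fd_subset: "fd U \<Longrightarrow> V \<subseteq> U \<Longrightarrow> fd V"
  unfolding fd_def by blast

lemma dim_mono_fd:
  assumes "fd U" "V \<subseteq> U"
  shows "Q.dim V \<le> Q.dim U"
proof -
  obtain BU where BU: "BU \<subseteq> U" "Q.independent BU" "U \<subseteq> Q.span BU" "card BU = Q.dim U" "finite BU"
    using fd_basis[OF assms(1)] by blast
  show ?thesis using Q.dim_le_card[of V BU] BU assms(2) by auto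
qed

lemma dim_eq_fd:
  assumes "fd U" "V \<subseteq> U" "Q.subspace V" "Q.subspace U" "Q.dim V = Q.dim U"
  shows "V = U"
proof (rule ccontr)
  assume ne: "V \<noteq> U"
  obtain BV where BV: "BV \<subseteq> V" "Q.independent BV" "V \<subseteq> Q.span BV" "card BV = Q.dim V" "finite BV"
    using fd_basis[OF fd_subset[OF assms(1,2)]] by blast
  have spV: "Q.span BV = V" using Q.span_subspace[OF BV(1) BV(3) assms(3)] .
  obtain u where u: "u \<in> U" "u \<notin> V" using ne assms(2) by blast
  have ind: "Q.independent (insert u BV)"
    using Q.independent_insertI[of u BV] u spV BV(2) by auto
  have "insert u BV \<subseteq> U" using u BV(1) assms(2) by auto
  then have "Q.dim (insert u BV) \<le> Q.dim U" using dim_mono_fd[OF assms(1)] by blast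
  moreover have "Q.dim (insert u BV) = card (insert u BV)" using Q.dim_eq_card_independent[OF ind] .
  moreover have "u \<notin> BV" using u BV(1) by auto
  ultimately show False using BV(4,5) assms(5) by simp
qed

lemma dim_pos:
  assumes "fd U" "x \<in> U" "x \<noteq> 0"
  shows "Q.dim U \<ge> 1"
proof -
  have "Q.dim {x} \<le> Q.dim U" using dim_mono_fd[OF assms(1)] assms(2) by auto
  moreover have "Q.independent {x}" using assms(3) by simp
  then have "Q.dim {x} = 1" using Q.dim_eq_card_independent by fastforce
  ultimately show ?thesis by simp
qed

lemma Rats_span: "Q.span {1} = \<rat>"
  by (auto simp: Q.span_singleton qscale_eq Rats_def)

lemma dim_Rats: "Q.dim (\<rat> :: complex set) = 1"
proof -
  have "Q.dim (Q.span {1::complex}) = 1"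
    using Q.dim_span_eq_card_independent[of "{1::complex}"] by simp
  then show ?thesis by (simp add: Rats_span)
qed

lemma fd_Rats: "fd (\<rat> :: complex set)"
  unfolding fd_def using Rats_span by blast

lemma subspace_Rats: "Q.subspace (\<rat> :: complex set)"
  using Q.subspace_span Rats_span by metis

definition qring :: "complex set \<Rightarrow> bool" where
  "qring R \<longleftrightarrow> \<rat> \<subseteq> R \<and> (\<forall>x\<in>R. \<forall>y\<in>R. x + y \<in> R \<and> x * y \<in> R)"

definition Fpoly :: "complex set \<Rightarrow> complex poly \<Rightarrow> bool" where
  "Fpoly F p \<longleftrightarrow> (\<forall>i. coeff p i \<in> F)"

lemma qringD: assumes "qring R"
  shows "\<rat> \<subseteq> R" "x \<in> R \<Longrightarrow> y \<in> R \<Longrightarrow> x + y \<in> R" "x \<in> R \<Longrightarrow> y \<in> R \<Longrightarrow> x * y \<in> R"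
  using assms by (auto simp: qring_def)

lemma qring_0: "qring R \<Longrightarrow> 0 \<in> R" and qring_1: "qring R \<Longrightarrow> 1 \<in> R"
  by (auto simp: qring_def)

lemma qring_neg: "qring R \<Longrightarrow> x \<in> R \<Longrightarrow> - x \<in> R"
proof -
  assume R: "qring R" "x \<in> R"
  have "(-1::complex) \<in> \<rat>" by simp
  then have "-1 \<in> R" using qringD(1)[OF R(1)] by blast
  then have "(-1) * x \<in> R" using qringD(3)[OF R(1) _ R(2)] by blast
  then show ?thesis by simp
qed

lemma qring_diff: "qring R \<Longrightarrow> x \<in> R \<Longrightarrow> y \<in> R \<Longrightarrow> x - y \<in> R"
  using qring_neg qringD(2) by (metis diff_conv_add_uminus)

lemma qring_subspace: "qring R \<Longrightarrow> Q.subspace R"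
  unfolding Q.subspace_def qscale_eq
proof (intro conjI ballI allI)
  fix c x assume R: "qring R" and x: "x \<in> R"
  have "of_rat c \<in> R" using qringD(1)[OF R] by (auto simp: Rats_def)
  then show "of_rat c * x \<in> R" using qringD(3)[OF R _ x] by blast
qed (auto simp: qring_0 qringD)

lemma qring_sum: "qring R \<Longrightarrow> (\<And>x. x \<in> A \<Longrightarrow> f x \<in> R) \<Longrightarrow> sum f A \<in> R"
  using Q.subspace_sum qring_subspace by blast

lemma qring_prod: "qring R \<Longrightarrow> (\<And>x. x \<in> A \<Longrightarrow> f x \<in> R) \<Longrightarrow> prod f A \<in> R"
  by (induct A rule: infinite_finite_induct) (auto simp: qring_1 qringD)

lemma qring_power: "qring R \<Longrightarrow> x \<in> R \<Longrightarrow> x ^ n \<in> R"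
  by (induct n) (auto simp: qring_1 qringD)

lemma qring_poly: "qring R \<Longrightarrow> Fpoly R p \<Longrightarrow> x \<in> R \<Longrightarrow> poly p x \<in> R"
  unfolding poly_altdef Fpoly_def
  by (auto intro!: qring_sum qringD(3) qring_power)

lemma subfield_Ints: assumes "is_subfield F" shows "of_int n \<in> F"
proof -
  have F: "0 \<in> F" "1 \<in> F" "\<And>x y. x \<in> F \<Longrightarrow> y \<in> F \<Longrightarrow> x + y \<in> F" "\<And>x. x \<in> F \<Longrightarrow> -x \<in> F"
    using assms by (auto simp: is_subfield_def)
  have nat: "of_nat m \<in> F" for m by (induct m) (auto simp: F)
  show ?thesis
  proof (cases "n \<ge> 0")
    case True then show ?thesis using nat[of "nat n"] by simp
  next
    case False then show ?thesis using F(4)[OF nat[of "nat (-n)"]] by simp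
  qed
qed

lemma subfield_Rats: assumes "is_subfield F" shows "\<rat> \<subseteq> F"
proof
  fix x :: complex assume "x \<in> \<rat>"
  then obtain q where q: "x = of_rat q" by (auto simp: Rats_def)
  obtain a b where ab: "q = Rat.Fract a b" "b > 0" by (cases q) auto
  have xq: "x = of_int a * inverse (of_int b)" using q ab by (simp add: of_rat_rat divide_inverse)
  have "of_int b \<in> F" "of_int a \<in> F" using subfield_Ints[OF assms] by auto
  moreover have "(of_int b :: complex) \<noteq> 0" using ab by simp
  ultimately have "inverse (of_int b :: complex) \<in> F" using assms by (auto simp: is_subfield_def)
  then show "x \<in> F" using xq \<open>of_int a \<in> F\<close> assms by (auto simp: is_subfield_def)
qed

lemma subfield_qring: "is_subfield F \<Longrightarrow> qring F"
  using subfield_Rats by (auto simp: qring_def is_subfield_def)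

lemma Fpoly_mono: "Fpoly F p \<Longrightarrow> F \<subseteq> G \<Longrightarrow> Fpoly G p"
  by (auto simp: Fpoly_def)

lemma Fpoly_Rats_map: "Fpoly \<rat> (map_poly of_rat p)"
  by (auto simp: Fpoly_def coeff_map_poly)

lemma Fpoly_Rats_ex: assumes "Fpoly \<rat> p" shows "\<exists>p'. p = map_poly of_rat p'"
proof -
  define g where "g c = (SOME q. c = of_rat q)" for c :: complex
  have g: "of_rat (g c) = c" if "c \<in> \<rat>" for c
    using that unfolding g_def Rats_def by (metis (mono_tags, lifting) imageE someI)
  have "coeff (map_poly of_rat (map_poly g p)) i = coeff p i" for i
  proof -
    have g0: "g 0 = 0" using g[of 0] by simp
    show ?thesis using g assms by (simp add: coeff_map_poly g0 Fpoly_def)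
  qed
  then show ?thesis using poly_eq_iff by metis
qed

lemma algebraic_fd:
  assumes "fd V" "\<And>i. z ^ i \<in> V"
  shows "\<exists>p. Fpoly \<rat> p \<and> p \<noteq> 0 \<and> poly p z = 0"
proof -
  obtain W where W: "finite W" "V \<subseteq> Q.span W" using assms(1) fd_def by auto
  define n where "n = card W"
  define P where "P = (\<lambda>i. z ^ i) ` {..n}"
  show ?thesis
  proof (cases "inj_on (\<lambda>i. z ^ i) {..n}")
    case False
    then obtain i j where ij: "i \<le> n" "j \<le> n" "i \<noteq> j" "z ^ i = z ^ j"
      unfolding inj_on_def by auto
    define p where "p = monom (1::complex) j - monom 1 i"
    have "coeff p j = 1" using ij by (simp add: p_def)
    then have "p \<noteq> 0" by auto
    moreover have "poly p z = 0" using ij by (simp add: p_def poly_monom)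
    moreover have "Fpoly \<rat> p" by (auto simp: Fpoly_def p_def)
    ultimately show ?thesis by blast
  next
    case True
    have cardP: "card P = n + 1" using True by (simp add: P_def card_image)
    have "P \<subseteq> Q.span W" using assms(2) W(2) by (auto simp: P_def)
    then have "Q.dependent P"
      using Q.independent_span_bound[OF W(1), of P] cardP n_def by auto
    then obtain T u where Tu: "finite T" "T \<subseteq> P" "(\<Sum>v\<in>T. qscale (u v) v) = 0" "\<exists>v\<in>T. u v \<noteq> 0"
      unfolding Q.dependent_explicit by blast
    define c where "c i = (if z ^ i \<in> T then u (z ^ i) else 0)" for i
    define p where "p = (\<Sum>i\<le>n. monom (of_rat (c i) :: complex) i)"
    have coeffp: "coeff p i = (if i \<le> n then of_rat (c i) else 0)" for i
      by (simp add: p_def coeff_sum)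
    obtain v where v: "v \<in> T" "u v \<noteq> 0" using Tu by auto
    then obtain i where i: "i \<le> n" "v = z ^ i" using Tu(2) P_def by auto
    have "coeff p i \<noteq> 0" using coeffp[of i] i v by (simp add: c_def)
    then have "p \<noteq> 0" by auto
    moreover have "Fpoly \<rat> p" using coeffp by (auto simp: Fpoly_def)
    moreover have "poly p z = 0"
    proof -
      define I where "I = {i. i \<le> n \<and> z ^ i \<in> T}"
      have "poly p z = (\<Sum>i\<le>n. of_rat (c i) * z ^ i)"
        by (simp add: p_def poly_sum poly_monom)
      also have "\<dots> = (\<Sum>i\<in>I. of_rat (u (z ^ i)) * z ^ i)"
        by (rule sum.mono_neutral_cong_right) (auto simp: I_def c_def)
      also have "\<dots> = (\<Sum>v\<in>(\<lambda>i. z ^ i) ` I. of_rat (u v) * v)"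
        by (rule sum.reindex[symmetric, unfolded comp_def]) (rule inj_on_subset[OF True], auto simp: I_def)
      also have "(\<lambda>i. z ^ i) ` I = T" using Tu(2) by (auto simp: I_def P_def)
      finally show ?thesis using Tu(3) by (simp add: qscale_eq)
    qed
    ultimately show ?thesis by blast
  qed
qed

lemma inverse_in_qring:
  assumes R: "qring R" and z: "z \<in> R" "z \<noteq> 0" and p: "Fpoly \<rat> p" "p \<noteq> 0" "poly p z = 0"
  shows "inverse z \<in> R"
proof -
  obtain q where q: "p = [:0, 1:] ^ order 0 p * q" "\<not> [:0, 1:] dvd q"
    using order_decomp[OF p(2), of 0] by auto
  have q0: "poly q 0 \<noteq> 0" using q(2) by (simp add: poly_eq_0_iff_dvd)
  have Fq: "Fpoly \<rat> q"
  proof -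
    have "coeff p (i + order 0 p) = coeff q i" for i
      proof -
      have "[:0, 1:] ^ order 0 p = (monom 1 (order 0 p) :: complex poly)" by (simp add: monom_altdef)
      then show ?thesis by (subst q(1)) (simp add: coeff_monom_mult)
    qed
    then show ?thesis using p(1) unfolding Fpoly_def by metis
  qed
  have "poly q z = 0" using p(3) z(2) by (subst (asm) q(1)) simp
  obtain c q' where cq: "q = pCons c q'" by (cases q) auto
  have c: "c \<noteq> 0" "c \<in> \<rat>" using q0 cq Fq by (auto simp: Fpoly_def) (metis coeff_pCons_0)
  have Fq': "Fpoly \<rat> q'" using Fq cq by (auto simp: Fpoly_def) (metis coeff_pCons_Suc)
  have "c + z * poly q' z = 0" using \<open>poly q z = 0\<close> cq by simp
  then have "inverse z = - poly q' z / c" using z(2) c(1)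
    by (simp add: field_simps) (metis add.commute add_eq_0_iff2 mult.commute)
  moreover have "poly q' z \<in> R" using qring_poly[OF R Fpoly_mono[OF Fq' qringD(1)[OF R]] z(1)] .
  moreover have "inverse c \<in> R" using c qringD(1)[OF R] by auto
  ultimately show ?thesis using R
    by (simp add: divide_inverse qring_neg qringD(3))
qed

lemma qring_fd_subfield:
  assumes "qring R" "fd R"
  shows "is_subfield R"
proof -
  have "inverse z \<in> R" if zR: "z \<in> R" "z \<noteq> 0" for z
  proof -
    have "\<And>i. z ^ i \<in> R" using qring_power[OF assms(1) zR(1)] by blast
    then obtain p where "Fpoly \<rat> p" "p \<noteq> 0" "poly p z = 0"
      using algebraic_fd[OF assms(2)] by blast
    then show ?thesis using inverse_in_qring assms(1) zR by blast
  qed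
  then show ?thesis using assms(1)
    by (auto simp: is_subfield_def qring_0 qring_1 qringD qring_neg)
qed

lemma Fpoly_add: "Fpoly F a \<Longrightarrow> Fpoly F b \<Longrightarrow> qring F \<Longrightarrow> Fpoly F (a + b)"
  by (auto simp: Fpoly_def qringD)
lemma Fpoly_diff: "Fpoly F a \<Longrightarrow> Fpoly F b \<Longrightarrow> qring F \<Longrightarrow> Fpoly F (a - b)"
  by (auto simp: Fpoly_def qring_diff)
lemma Fpoly_mult: "Fpoly F a \<Longrightarrow> Fpoly F b \<Longrightarrow> qring F \<Longrightarrow> Fpoly F (a * b)"
  by (auto simp: Fpoly_def coeff_mult intro!: qring_sum qringD(3))
lemma Fpoly_const: "c \<in> F \<Longrightarrow> qring F \<Longrightarrow> Fpoly F [:c:]"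
  by (auto simp: Fpoly_def coeff_pCons qring_0 split: nat.split)
lemma Fpoly_monom: "c \<in> F \<Longrightarrow> qring F \<Longrightarrow> Fpoly F (monom c n)"
  by (auto simp: Fpoly_def qring_0)
lemma Fpoly_smult: "c \<in> F \<Longrightarrow> Fpoly F a \<Longrightarrow> qring F \<Longrightarrow> Fpoly F (smult c a)"
  by (auto simp: Fpoly_def qringD)
lemma Fpoly_0: "qring F \<Longrightarrow> Fpoly F 0"
  by (auto simp: Fpoly_def qring_0)

lemma Fpoly_divmod:
  assumes F: "qring F" and r: "Fpoly F r" "lead_coeff r = 1" "degree r > 0" and a: "Fpoly F a"
  shows "\<exists>q m. Fpoly F q \<and> Fpoly F m \<and> a = q * r + m \<and> degree m < degree r"
  using a
proof (induction "degree a" arbitrary: a rule: less_induct)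
  case (less a)
  show ?case
  proof (cases "degree a < degree r")
    case True
    then show ?thesis using less.prems F by (intro exI[of _ 0] exI[of _ a]) (auto simp: Fpoly_0)
  next
    case False
    define k where "k = degree a - degree r"
    define c where "c = lead_coeff a"
    define a' where "a' = a - monom c k * r"
    have cF: "c \<in> F" using less.prems by (auto simp: Fpoly_def c_def)
    have Fa': "Fpoly F a'" unfolding a'_def
      by (intro Fpoly_diff Fpoly_mult Fpoly_monom less.prems r cF F)
    have z: "coeff a' j = 0" if "j \<ge> degree a" for j
    proof (cases "j = degree a")
      case True
      then have "j - k = degree r" "\<not> j < k" using False k_def by auto
      then show ?thesis using True r(2) by (simp add: a'_def coeff_monom_mult c_def)
    next
      case False
      then have "j > degree a" using that by auto
      then have "j - k > degree r" "\<not> j < k" using k_def \<open>\<not> degree a < degree r\<close> by auto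
      then show ?thesis using \<open>j > degree a\<close>
        by (simp add: a'_def coeff_monom_mult coeff_eq_0)
    qed
    have "degree a' \<le> degree a - 1" using z by (intro degree_le) auto
    moreover have "degree a > 0" using False r(3) by auto
    ultimately have "degree a' < degree a" by auto
    then obtain q m where qm: "Fpoly F q" "Fpoly F m" "a' = q * r + m" "degree m < degree r"
      using less.hyps Fa' by blast
    have "a = (q + monom c k) * r + m" using qm(3) by (simp add: a'_def algebra_simps)
    moreover have "Fpoly F (q + monom c k)" by (intro Fpoly_add Fpoly_monom qm cF F)
    ultimately show ?thesis using qm by blast
  qed
qed

lemma span_mult:
  assumes "x \<in> Q.span A" "y \<in> Q.span B"
  shows "x * y \<in> Q.span {a * b |a b. a \<in> A \<and> b \<in> B}"
proof -
  let ?P = "{a * b |a b. a \<in> A \<and> b \<in> B}"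
  have 1: "a * y \<in> Q.span ?P" if "a \<in> A" for a
    using assms(2)
  proof (induction rule: Q.span_induct_alt)
    case base then show ?case by (simp add: Q.span_zero)
  next
    case (step c b y)
    have "a * (qscale c b + y) = qscale c (a * b) + a * y" by (simp add: qscale_eq algebra_simps)
    moreover have "a * b \<in> Q.span ?P" using that step by (auto intro: Q.span_base)
    ultimately show ?case using step by (auto intro!: Q.span_add Q.span_scale)
  qed
  show ?thesis using assms(1)
  proof (induction rule: Q.span_induct_alt)
    case base then show ?case by (simp add: Q.span_zero)
  next
    case (step c a x)
    have "(qscale c a + x) * y = qscale c (a * y) + x * y" by (simp add: qscale_eq algebra_simps)
    then show ?case using step 1 by (auto intro!: Q.span_add Q.span_scale)
  qed
qed

lemma fd_span_mult:
  assumes "fd A" "fd B"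
  shows "fd {a * b |a b. a \<in> A \<and> b \<in> B}"
proof -
  obtain BA BB where "finite BA" "A \<subseteq> Q.span BA" "finite BB" "B \<subseteq> Q.span BB"
    using assms by (auto simp: fd_def)
  moreover have "finite {a * b |a b. a \<in> BA \<and> b \<in> BB}" if "finite BA" "finite BB"
  proof -
    have "{a * b |a b. a \<in> BA \<and> b \<in> BB} = (\<lambda>(a, b). a * b) ` (BA \<times> BB)" by auto
    then show ?thesis using that by simp
  qed
  ultimately show ?thesis unfolding fd_def using span_mult by blast
qed

definition Adj :: "complex set \<Rightarrow> complex \<Rightarrow> complex set" where
  "Adj F s = {poly a s |a. Fpoly F a}"

lemma Adj_qring: assumes "qring F" shows "qring (Adj F s)"
proof -
  have "\<rat> \<subseteq> Adj F s"
  proof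
    fix x :: complex assume "x \<in> \<rat>"
    then have "Fpoly F [:x:]" using Fpoly_const qringD(1)[OF assms] assms by blast
    then show "x \<in> Adj F s" unfolding Adj_def by force
  qed
  moreover have "x + y \<in> Adj F s \<and> x * y \<in> Adj F s" if xy: "x \<in> Adj F s" "y \<in> Adj F s" for x y
  proof -
    obtain a b where "Fpoly F a" "Fpoly F b" "x = poly a s" "y = poly b s"
      using xy by (auto simp: Adj_def)
    moreover have "Fpoly F (a + b)" "Fpoly F (a * b)"
      using Fpoly_add Fpoly_mult assms \<open>Fpoly F a\<close> \<open>Fpoly F b\<close> by blast+
    ultimately show ?thesis unfolding Adj_def
      by (metis (mono_tags, lifting) mem_Collect_eq poly_add poly_mult)
  qed
  ultimately show ?thesis by (auto simp: qring_def)
qed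

lemma Adj_sup: assumes "qring F" shows "F \<subseteq> Adj F s" "s \<in> Adj F s"
proof -
  show "F \<subseteq> Adj F s"
  proof
    fix x assume "x \<in> F"
    then have "Fpoly F [:x:]" using Fpoly_const assms by blast
    then show "x \<in> Adj F s" unfolding Adj_def by force
  qed
  have "Fpoly F (monom 1 1)" using Fpoly_monom qring_1 assms by blast
  then show "s \<in> Adj F s" unfolding Adj_def by (force simp: poly_monom)
qed

lemma monic_Fpoly:
  assumes F: "is_subfield F" and p: "Fpoly F p" "p \<noteq> 0"
  shows "Fpoly F (smult (inverse (lead_coeff p)) p)" "lead_coeff (smult (inverse (lead_coeff p)) p) = 1"
    "degree (smult (inverse (lead_coeff p)) p) = degree p"
    "poly (smult (inverse (lead_coeff p)) p) x = 0 \<longleftrightarrow> poly p x = 0"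
proof -
  have "lead_coeff p \<in> F" "lead_coeff p \<noteq> 0" using p by (auto simp: Fpoly_def)
  then have "inverse (lead_coeff p) \<in> F" using F by (auto simp: is_subfield_def)
  then show "Fpoly F (smult (inverse (lead_coeff p)) p)"
    using Fpoly_smult p(1) subfield_qring[OF F] by blast
  show "lead_coeff (smult (inverse (lead_coeff p)) p) = 1" using p(2) by (simp add: lead_coeff_smult)
  show "degree (smult (inverse (lead_coeff p)) p) = degree p" using p(2) by simp
  show "poly (smult (inverse (lead_coeff p)) p) x = 0 \<longleftrightarrow> poly p x = 0" using p(2) by simp
qed

lemma Adj_fd:
  assumes F: "is_subfield F" "fd F" and f: "Fpoly \<rat> f" "f \<noteq> 0" "poly f s = 0"
  shows "fd (Adj F s)"
proof -
  have qF: "qring F" using subfield_qring[OF F(1)] .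
  have fF: "Fpoly F f" using Fpoly_mono[OF f(1) qringD(1)[OF qF]] .
  define g where "g = smult (inverse (lead_coeff f)) f"
  have g: "Fpoly F g" "lead_coeff g = 1" "poly g s = 0"
    using monic_Fpoly[OF F(1) fF f(2)] f(3) by (auto simp: g_def)
  have "degree g > 0"
  proof (rule ccontr)
    assume "\<not> degree g > 0"
    then have "degree g = 0" by simp
    then have "g = [:lead_coeff g:]" by (metis degree_0_id)
    then have "g = [:1:]" using g(2) by simp
    then show False using g(3) by simp
  qed
  define d where "d = degree g"
  obtain BF where BF: "finite BF" "F \<subseteq> Q.span BF" using F(2) fd_def by auto
  define P where "P = {a * b |a b. a \<in> BF \<and> b \<in> (\<lambda>i. s ^ i) ` {..<d}}"
  have "finite P"
  proof -
    have "P = (\<lambda>(a, b). a * b) ` (BF \<times> ((\<lambda>i. s ^ i) ` {..<d}))" by (auto simp: P_def)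
    then show ?thesis using BF by simp
  qed
  moreover have "Adj F s \<subseteq> Q.span P"
  proof
    fix x assume "x \<in> Adj F s"
    then obtain a where a: "Fpoly F a" "x = poly a s" by (auto simp: Adj_def)
    obtain q m where qm: "Fpoly F q" "Fpoly F m" "a = q * g + m" "degree m < degree g"
      using Fpoly_divmod[OF qF g(1,2) \<open>degree g > 0\<close> a(1)] by blast
    have "x = poly m s" using a(2) qm(3) g(3) by simp
    also have "\<dots> = (\<Sum>i\<le>degree m. coeff m i * s ^ i)" by (simp add: poly_altdef)
    also have "\<dots> \<in> Q.span P"
    proof (rule Q.span_sum)
      fix i assume i: "i \<in> {..degree m}"
      have "coeff m i \<in> Q.span BF" using qm(2) BF(2) by (auto simp: Fpoly_def)
      moreover have "s ^ i \<in> Q.span ((\<lambda>i. s ^ i) ` {..<d})"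
        using i qm(4) d_def by (intro Q.span_base) auto
      ultimately show "coeff m i * s ^ i \<in> Q.span P" unfolding P_def by (rule span_mult)
    qed
    finally show "x \<in> Q.span P" .
  qed
  ultimately show ?thesis unfolding fd_def by blast
qed

lemma Adj_subfield:
  assumes F: "is_subfield F" "fd F" and f: "Fpoly \<rat> f" "f \<noteq> 0" "poly f s = 0"
  shows "is_subfield (Adj F s)"
  using qring_fd_subfield[OF Adj_qring[OF subfield_qring[OF F(1)]] Adj_fd[OF assms]] .

definition hom_on :: "complex set \<Rightarrow> (complex \<Rightarrow> complex) \<Rightarrow> bool" where
  "hom_on F \<phi> \<longleftrightarrow> \<phi> 1 = 1 \<and> (\<forall>a\<in>F. \<forall>b\<in>F. \<phi> (a + b) = \<phi> a + \<phi> b \<and> \<phi> (a * b) = \<phi> a * \<phi> b)"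

context
  fixes F \<phi> assumes F: "qring F" and h: "hom_on F \<phi>"
begin

lemma hom_add: "a \<in> F \<Longrightarrow> b \<in> F \<Longrightarrow> \<phi> (a + b) = \<phi> a + \<phi> b"
  and hom_mult: "a \<in> F \<Longrightarrow> b \<in> F \<Longrightarrow> \<phi> (a * b) = \<phi> a * \<phi> b"
  and hom_1: "\<phi> 1 = 1"
  using h by (auto simp: hom_on_def)

lemma hom_0: "\<phi> 0 = 0"
  using hom_add[of 0 0] qring_0[OF F] by simp

lemma hom_neg: "a \<in> F \<Longrightarrow> \<phi> (- a) = - \<phi> a"
proof -
  assume a: "a \<in> F"
  have "\<phi> a + \<phi> (- a) = 0" using hom_add[of a "-a"] qring_neg[OF F a] a hom_0 by simp
  then show ?thesis by (simp add: add_eq_0_iff)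
qed

lemma hom_diff: "a \<in> F \<Longrightarrow> b \<in> F \<Longrightarrow> \<phi> (a - b) = \<phi> a - \<phi> b"
  using hom_add[of a "-b"] hom_neg[of b] qring_neg[OF F] by simp

lemma hom_sum: "(\<And>x. x \<in> A \<Longrightarrow> f x \<in> F) \<Longrightarrow> \<phi> (sum f A) = (\<Sum>x\<in>A. \<phi> (f x))"
proof (induct A rule: infinite_finite_induct)
  case (insert x A)
  have "sum f A \<in> F" using qring_sum[OF F, of A f] insert.prems by auto
  moreover have "f x \<in> F" using insert.prems by auto
  ultimately show ?case using hom_add[of "f x" "sum f A"] insert by auto
qed (auto simp: hom_0)

lemma hom_int: "\<phi> (of_int n) = of_int n"
proof -
  have intF: "of_int m \<in> F" for m using qringD(1)[OF F] by auto
  have nat: "\<phi> (of_nat m) = of_nat m" for m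
  proof (induct m)
    case (Suc m)
    have "\<phi> (of_nat (Suc m)) = \<phi> (1 + of_nat m)" by simp
    also have "\<dots> = 1 + of_nat m" using hom_add[of 1 "of_nat m"] intF[of 1] intF[of "int m"] Suc hom_1 by simp
    finally show ?case by simp
  qed (simp add: hom_0)
  show ?thesis
  proof (cases "n \<ge> 0")
    case True then show ?thesis using nat[of "nat n"] by simp
  next
    case False then show ?thesis using hom_neg[of "of_nat (nat (-n))"] nat[of "nat (-n)"] intF[of "int (nat (-n))"] by simp
  qed
qed

lemma hom_rat: "x \<in> \<rat> \<Longrightarrow> \<phi> x = x"
proof -
  assume "x \<in> \<rat>"
  then obtain q where q: "x = of_rat q" by (auto simp: Rats_def)
  obtain a b where ab: "q = Rat.Fract a b" "b > 0" by (cases q) auto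
  have x: "x = of_int a / of_int b" using q ab by (simp add: of_rat_rat)
  have xF: "x \<in> F" using \<open>x \<in> \<rat>\<close> qringD(1)[OF F] by auto
  have intF: "of_int m \<in> F" for m using qringD(1)[OF F] by auto
  have "of_int b * x = of_int a" using ab x by simp
  then have "\<phi> (of_int b * x) = of_int a" using hom_int by simp
  then have "of_int b * \<phi> x = of_int a" using hom_mult[OF intF xF] hom_int by simp
  moreover have "of_int b * x = of_int a" using ab x by simp
  moreover have "(of_int b :: complex) \<noteq> 0" using ab by simp
  ultimately show "\<phi> x = x" by (metis mult_left_cancel)
qed

lemma coeff_mp: "coeff (map_poly \<phi> a) n = \<phi> (coeff a n)"
  by (simp add: coeff_map_poly hom_0)

lemma mp_add: "Fpoly F a \<Longrightarrow> Fpoly F b \<Longrightarrow> map_poly \<phi> (a + b) = map_poly \<phi> a + map_poly \<phi> b"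
  by (rule poly_eqI) (simp add: coeff_mp hom_add Fpoly_def)

lemma mp_diff: "Fpoly F a \<Longrightarrow> Fpoly F b \<Longrightarrow> map_poly \<phi> (a - b) = map_poly \<phi> a - map_poly \<phi> b"
  by (rule poly_eqI) (simp add: coeff_mp hom_diff Fpoly_def)

lemma mp_mult: "Fpoly F a \<Longrightarrow> Fpoly F b \<Longrightarrow> map_poly \<phi> (a * b) = map_poly \<phi> a * map_poly \<phi> b"
proof (rule poly_eqI)
  fix n assume a: "Fpoly F a" and b: "Fpoly F b"
  have "coeff (map_poly \<phi> (a * b)) n = \<phi> (\<Sum>i\<le>n. coeff a i * coeff b (n - i))"
    by (simp add: coeff_mp coeff_mult)
  also have "\<dots> = (\<Sum>i\<le>n. \<phi> (coeff a i) * \<phi> (coeff b (n - i)))"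
    using a b by (subst hom_sum) (auto simp: Fpoly_def hom_mult qringD(3)[OF F])
  finally show "coeff (map_poly \<phi> (a * b)) n = coeff (map_poly \<phi> a * map_poly \<phi> b) n"
    by (simp add: coeff_mult coeff_mp)
qed

lemma mp_const: "c \<in> F \<Longrightarrow> map_poly \<phi> [:c:] = [:\<phi> c:]"
  by (rule poly_eqI) (simp add: coeff_mp coeff_pCons hom_0 split: nat.split)

lemma mp_X: "map_poly \<phi> (monom 1 1) = monom 1 1"
  by (rule poly_eqI) (simp add: coeff_mp hom_0 hom_1)

lemma mp_rat: "Fpoly \<rat> a \<Longrightarrow> map_poly \<phi> a = a"
  by (rule poly_eqI) (simp add: coeff_mp hom_rat Fpoly_def)

lemma hom_poly: "Fpoly F a \<Longrightarrow> x \<in> F \<Longrightarrow> \<phi> (poly a x) = poly (map_poly \<phi> a) (\<phi> x)"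
proof -
  assume a: "Fpoly F a" and x: "x \<in> F"
  have pw: "\<phi> (x ^ i) = \<phi> x ^ i" for i
    by (induct i) (auto simp: hom_1 hom_mult[OF x qring_power[OF F x]])
  have "\<phi> (poly a x) = \<phi> (\<Sum>i\<le>degree a. coeff a i * x ^ i)" by (simp add: poly_altdef)
  also have "\<dots> = (\<Sum>i\<le>degree a. \<phi> (coeff a i) * \<phi> x ^ i)"
    using a by (subst hom_sum) (auto simp: Fpoly_def hom_mult qringD(3)[OF F] qring_power[OF F x] x pw)
  also have "\<dots> = poly (\<Sum>i\<le>degree a. monom (coeff (map_poly \<phi> a) i) i) (\<phi> x)"
    by (simp add: poly_sum poly_monom coeff_mp)
  also have "(\<Sum>i\<le>degree a. monom (coeff (map_poly \<phi> a) i) i) = map_poly \<phi> a"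
    by (rule poly_as_sum_of_monoms') (rule map_poly_degree_leq)
  finally show ?thesis .
qed

end

lemma ext_hom:
  assumes F: "qring F" and h: "hom_on F \<phi>"
    and t: "\<And>a. Fpoly F a \<Longrightarrow> poly a s = 0 \<Longrightarrow> poly (map_poly \<phi> a) t = 0"
  shows "\<exists>\<psi>. hom_on (Adj F s) \<psi> \<and> (\<forall>c\<in>F. \<psi> c = \<phi> c) \<and> \<psi> s = t"
proof -
  define \<psi> where "\<psi> z = poly (map_poly \<phi> (SOME a. Fpoly F a \<and> poly a s = z)) t" for z
  have key: "\<psi> (poly a s) = poly (map_poly \<phi> a) t" if a: "Fpoly F a" for a
  proof -
    define a0 where "a0 = (SOME b. Fpoly F b \<and> poly b s = poly a s)"
    have a0: "Fpoly F a0 \<and> poly a0 s = poly a s" unfolding a0_def by (rule someI[of _ a]) (use a in auto)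
    have "poly (map_poly \<phi> (a0 - a)) t = 0"
      using t[of "a0 - a"] a0 a Fpoly_diff F by auto
    then show ?thesis using mp_diff[OF F h] a0 a by (simp add: \<psi>_def a0_def)
  qed
  have hom: "hom_on (Adj F s) \<psi>"
    unfolding hom_on_def
  proof (intro conjI ballI)
    have "\<psi> 1 = \<psi> (poly [:1:] s)" by simp
    also have "\<dots> = 1" using key[OF Fpoly_const[OF qring_1[OF F] F]] mp_const[OF F h qring_1[OF F]] hom_1[OF F h] by simp
    finally show "\<psi> 1 = 1" .
  next
    fix x y assume "x \<in> Adj F s" "y \<in> Adj F s"
    then obtain a b where ab: "Fpoly F a" "Fpoly F b" "x = poly a s" "y = poly b s"
      by (auto simp: Adj_def)
    have "\<psi> (x + y) = \<psi> (poly (a + b) s)" using ab by simp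
    also have "\<dots> = poly (map_poly \<phi> (a + b)) t" using key Fpoly_add[OF ab(1,2) F] by blast
    also have "\<dots> = \<psi> x + \<psi> y" using key ab mp_add[OF F h ab(1,2)] by simp
    finally show "\<psi> (x + y) = \<psi> x + \<psi> y" .
    have "\<psi> (x * y) = \<psi> (poly (a * b) s)" using ab by simp
    also have "\<dots> = poly (map_poly \<phi> (a * b)) t" using key Fpoly_mult[OF ab(1,2) F] by blast
    also have "\<dots> = \<psi> x * \<psi> y" using key ab mp_mult[OF F h ab(1,2)] by simp
    finally show "\<psi> (x * y) = \<psi> x * \<psi> y" .
  qed
  moreover have "\<forall>c\<in>F. \<psi> c = \<phi> c"
  proof
    fix c assume c: "c \<in> F"
    have "\<psi> c = \<psi> (poly [:c:] s)" by simp
    also have "\<dots> = \<phi> c" using key[OF Fpoly_const[OF c F]] mp_const[OF F h c] by simp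
    finally show "\<psi> c = \<phi> c" .
  qed
  moreover have "\<psi> s = t"
  proof -
    have "\<psi> s = \<psi> (poly (monom 1 1) s)" by (simp add: poly_monom)
    also have "\<dots> = poly (map_poly \<phi> (monom 1 1)) t" by (rule key[OF Fpoly_monom[OF qring_1[OF F] F]])
    also have "\<dots> = t" using mp_X[OF F h] by (simp add: poly_monom)
    finally show ?thesis .
  qed
  ultimately show ?thesis by blast
qed

lemma monic_deg_pos: "lead_coeff (g::complex poly) = 1 \<Longrightarrow> poly g s = 0 \<Longrightarrow> degree g > 0"
proof (rule ccontr)
  assume g: "lead_coeff g = 1" "poly g s = 0" "\<not> degree g > 0"
  then have "degree g = 0" by simp
  then have "g = [:lead_coeff g:]" by (metis degree_0_id)
  then have "g = [:1:]" using g(1) by simp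
  then show False using g(2) by simp
qed

lemma ext_root:
  assumes F: "is_subfield F" and h: "hom_on F \<phi>"
    and f: "Fpoly \<rat> f" "f \<noteq> 0" "poly f s = 0"
  shows "\<exists>t. (\<forall>a. Fpoly F a \<and> poly a s = 0 \<longrightarrow> poly (map_poly \<phi> a) t = 0) \<and> poly f t = 0"
proof -
  have qF: "qring F" using subfield_qring[OF F] .
  have fF: "Fpoly F f" using Fpoly_mono[OF f(1) qringD(1)[OF qF]] .
  define D where "D = {d. \<exists>r. Fpoly F r \<and> r \<noteq> 0 \<and> poly r s = 0 \<and> degree r = d}"
  have "degree f \<in> D" using fF f unfolding D_def by blast
  define d0 where "d0 = (LEAST d. d \<in> D)"
  have "d0 \<in> D" unfolding d0_def by (rule LeastI) (rule \<open>degree f \<in> D\<close>)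
  then obtain r0 where r0: "Fpoly F r0" "r0 \<noteq> 0" "poly r0 s = 0" "degree r0 = d0" unfolding D_def by blast
  define r where "r = smult (inverse (lead_coeff r0)) r0"
  have r: "Fpoly F r" "lead_coeff r = 1" "degree r = d0" "poly r s = 0"
    using monic_Fpoly[OF F r0(1,2)] r0 by (auto simp: r_def)
  have dpos: "degree r > 0" using monic_deg_pos r by blast
  have "degree (map_poly \<phi> r) = degree r"
  proof -
    have "coeff (map_poly \<phi> r) (degree r) = 1" using r(2) by (simp add: coeff_mp[OF qF h] hom_1[OF qF h])
    then have "degree (map_poly \<phi> r) \<ge> degree r" by (simp add: le_degree)
    moreover have "degree (map_poly \<phi> r) \<le> degree r" by (rule map_poly_degree_leq)
    ultimately show ?thesis by simp
  qed
  then have "\<not> constant (poly (map_poly \<phi> r))" using dpos constant_degree[of "map_poly \<phi> r"] by auto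
  then obtain t where t: "poly (map_poly \<phi> r) t = 0" using fundamental_theorem_of_algebra by blast
  have main: "poly (map_poly \<phi> a) t = 0" if a: "Fpoly F a" "poly a s = 0" for a
  proof -
    obtain q m where qm: "Fpoly F q" "Fpoly F m" "a = q * r + m" "degree m < degree r"
      using Fpoly_divmod[OF qF r(1,2) dpos a(1)] by blast
    have ms: "poly m s = 0" using a(2) qm(3) r(4) by simp
    have "m = 0"
    proof (rule ccontr)
      assume "m \<noteq> 0"
      then have "degree m \<in> D" using qm(2) ms unfolding D_def by blast
      then have "d0 \<le> degree m" unfolding d0_def by (rule Least_le)
      then show False using qm(4) r(3) by simp
    qed
    then have "map_poly \<phi> a = map_poly \<phi> q * map_poly \<phi> r" using qm(3) mp_mult[OF qF h qm(1) r(1)] by simp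
    then show ?thesis using t by simp
  qed
  moreover have "poly f t = 0" using main[OF fF f(3)] mp_rat[OF qF h f(1)] by simp
  ultimately show ?thesis by blast
qed

lemma ratmap_add: "map_poly (of_rat :: rat \<Rightarrow> complex) (a + b) = map_poly of_rat a + map_poly of_rat b"
  by (rule poly_eqI) (simp add: coeff_map_poly of_rat_add)

lemma ratmap_mult: "map_poly (of_rat :: rat \<Rightarrow> complex) (a * b) = map_poly of_rat a * map_poly of_rat b"
  by (rule poly_eqI) (simp add: coeff_map_poly coeff_mult of_rat_sum of_rat_mult)

lemma ratmap_1: "map_poly (of_rat :: rat \<Rightarrow> complex) 1 = 1"
  by (rule poly_eqI) (simp add: coeff_map_poly one_pCons coeff_pCons split: nat.split)

lemma irreducible_dvd:
  fixes p a :: "rat poly" and x :: complex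
  assumes p: "irreducible p" and px: "poly (map_poly of_rat p) x = 0" and ax: "poly (map_poly of_rat a) x = 0"
  shows "p dvd a"
proof (rule ccontr)
  assume nd: "\<not> p dvd a"
  have "prime_elem p" using p by (rule field_poly_irreducible_imp_prime)
  then have "coprime p a" using nd by (rule prime_elem_imp_coprime)
  then have "gcd p a = 1" by simp
  then have "fst (bezout_coefficients p a) * p + snd (bezout_coefficients p a) * a = 1"
    using bezout_coefficients_fst_snd[of p a] by simp
  then have "poly (map_poly of_rat (fst (bezout_coefficients p a) * p + snd (bezout_coefficients p a) * a)) x = 1"
    using ratmap_1 by simp
  then show False using px ax by (simp add: ratmap_add ratmap_mult)
qed

lemma is_subfield_Rats: "is_subfield (\<rat> :: complex set)"
  by (auto simp: is_subfield_def)

lemma qring_Rats: "qring (\<rat> :: complex set)"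
  by (auto simp: qring_def)

inductive_set Ncl :: "complex set \<Rightarrow> complex set" for S where
  Ncl_rat: "x \<in> \<rat> \<Longrightarrow> x \<in> Ncl S"
| Ncl_gen: "x \<in> S \<Longrightarrow> x \<in> Ncl S"
| Ncl_add: "x \<in> Ncl S \<Longrightarrow> y \<in> Ncl S \<Longrightarrow> x + y \<in> Ncl S"
| Ncl_mult: "x \<in> Ncl S \<Longrightarrow> y \<in> Ncl S \<Longrightarrow> x * y \<in> Ncl S"

lemma Ncl_qring: "qring (Ncl S)"
  by (auto simp: qring_def intro: Ncl.intros)

lemma Ncl_min: assumes "qring R" "S \<subseteq> R" shows "Ncl S \<subseteq> R"
proof
  fix x assume "x \<in> Ncl S"
  then show "x \<in> R"
    using assms(2) qringD(1)[OF assms(1)] qringD(2,3)[OF assms(1)] by induction auto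
qed

lemma Adj_in: assumes "qring R" "F \<subseteq> R" "s \<in> R" shows "Adj F s \<subseteq> R"
  using assms qring_poly Fpoly_mono unfolding Adj_def by blast

lemma Ncl_field:
  assumes fin: "finite S" and alg: "\<And>s. s \<in> S \<Longrightarrow> \<exists>g. Fpoly \<rat> g \<and> g \<noteq> 0 \<and> poly g s = 0"
  shows "is_subfield (Ncl S) \<and> fd (Ncl S)"
proof -
  have "\<exists>F. is_subfield F \<and> fd F \<and> set L \<subseteq> F \<and> F \<subseteq> Ncl S" if "set L \<subseteq> S" for L
    using that
  proof (induction L)
    case Nil
    then show ?case using is_subfield_Rats fd_Rats by (auto intro!: exI[of _ \<rat>] Ncl_rat)
  next
    case (Cons s L)
    then obtain F where F: "is_subfield F" "fd F" "set L \<subseteq> F" "F \<subseteq> Ncl S" by auto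
    have s: "s \<in> S" using Cons by auto
    obtain g where g: "Fpoly \<rat> g" "g \<noteq> 0" "poly g s = 0" using alg[OF s] by blast
    have "is_subfield (Adj F s)" "fd (Adj F s)" using Adj_subfield[OF F(1,2) g] Adj_fd[OF F(1,2) g] by auto
    moreover have "set (s # L) \<subseteq> Adj F s" using Adj_sup[OF subfield_qring[OF F(1)]] F(3) by auto
    moreover have "Adj F s \<subseteq> Ncl S" using Adj_in[OF Ncl_qring F(4)] s Ncl_gen by blast
    ultimately show ?case by blast
  qed
  moreover obtain L where "set L = S" using finite_list[OF fin] by blast
  ultimately obtain F where F: "is_subfield F" "fd F" "S \<subseteq> F" "F \<subseteq> Ncl S" by blast
  have "Ncl S \<subseteq> F" using Ncl_min[OF subfield_qring[OF F(1)] F(3)] .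
  then have "Ncl S = F" using F(4) by auto
  then show ?thesis using F by simp
qed

lemma Ncl_normal:
  assumes f: "Fpoly \<rat> f" "f \<noteq> 0"
  defines "S \<equiv> {z. poly f z = 0}"
  shows "normal_over_Q (Ncl S)"
  unfolding normal_over_Q_def
proof (intro ballI allI impI)
  fix x y :: complex and p :: "rat poly"
  assume x: "x \<in> Ncl S" and p: "irreducible p \<and> poly (map_poly of_rat p) x = 0"
     and y: "poly (map_poly of_rat p) y = 0"
  have fin: "finite S" using poly_roots_finite[OF f(2)] by (simp add: S_def)
  have p0: "p \<noteq> 0" using p by auto
  have mp0: "map_poly (of_rat :: rat \<Rightarrow> complex) p \<noteq> 0" using p0 by (simp add: map_poly_eq_0_iff)
  have base: "\<exists>\<psi>. hom_on (Adj \<rat> x) \<psi> \<and> (\<forall>c\<in>\<rat>. \<psi> c = id c) \<and> \<psi> x = y"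
  proof (rule ext_hom[OF qring_Rats])
    show "hom_on \<rat> id" by (simp add: hom_on_def)
    fix a assume a: "Fpoly \<rat> a" "poly a x = 0"
    obtain a' where a': "a = map_poly of_rat a'" using Fpoly_Rats_ex[OF a(1)] by blast
    have "p dvd a'" using irreducible_dvd[of p x a'] p a a' by simp
    then obtain c where "a' = p * c" by blast
    then show "poly (map_poly id a) y = 0" using a' y by (simp add: ratmap_mult)
  qed
  have chain: "\<exists>F \<psi>. is_subfield F \<and> fd F \<and> x \<in> F \<and> set L \<subseteq> F \<and> hom_on F \<psi> \<and> \<psi> x = y
                 \<and> (\<forall>s\<in>set L. \<psi> s \<in> S)" if "set L \<subseteq> S" for L
    using that
  proof (induction L)
    case Nil
    obtain \<psi> where \<psi>: "hom_on (Adj \<rat> x) \<psi>" "\<psi> x = y" using base by blast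
    have "is_subfield (Adj \<rat> x)" "fd (Adj \<rat> x)"
      using Adj_subfield[OF is_subfield_Rats fd_Rats Fpoly_Rats_map mp0] Adj_fd[OF is_subfield_Rats fd_Rats Fpoly_Rats_map mp0] p
      by auto
    moreover have "x \<in> Adj \<rat> x" using Adj_sup[OF qring_Rats] by auto
    ultimately show ?case using \<psi> by auto
  next
    case (Cons s L)
    then obtain F \<psi> where F: "is_subfield F" "fd F" "x \<in> F" "set L \<subseteq> F" "hom_on F \<psi>" "\<psi> x = y"
      "\<forall>s\<in>set L. \<psi> s \<in> S" by auto
    have s: "s \<in> S" using Cons by auto
    then have fs: "poly f s = 0" by (simp add: S_def)
    obtain t where t: "\<forall>a. Fpoly F a \<and> poly a s = 0 \<longrightarrow> poly (map_poly \<psi> a) t = 0" "poly f t = 0"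
      using ext_root[OF F(1) F(5) f fs] by blast
    obtain \<psi>' where \<psi>': "hom_on (Adj F s) \<psi>'" "\<forall>c\<in>F. \<psi>' c = \<psi> c" "\<psi>' s = t"
      using ext_hom[OF subfield_qring[OF F(1)] F(5)] t(1) by blast
    have "is_subfield (Adj F s)" "fd (Adj F s)" using Adj_subfield[OF F(1,2) f fs] Adj_fd[OF F(1,2) f fs] by auto
    moreover have "F \<subseteq> Adj F s" "s \<in> Adj F s" using Adj_sup[OF subfield_qring[OF F(1)]] by auto
    moreover have "t \<in> S" using t(2) by (simp add: S_def)
    ultimately show ?case using F \<psi>' by (intro exI[of _ "Adj F s"] exI[of _ \<psi>']) auto
  qed
  obtain L where "set L = S" using finite_list[OF fin] by blast
  then obtain F \<psi> where F: "is_subfield F" "fd F" "x \<in> F" "S \<subseteq> F" "hom_on F \<psi>" "\<psi> x = y"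
      "\<forall>s\<in>S. \<psi> s \<in> S" using chain by blast
  have NF: "Ncl S \<subseteq> F" using Ncl_min[OF subfield_qring[OF F(1)] F(4)] .
  have "\<psi> z \<in> Ncl S" if "z \<in> Ncl S" for z
    using that
  proof induction
    case (Ncl_rat z)
    then show ?case using hom_rat[OF subfield_qring[OF F(1)] F(5)] by (auto intro: Ncl.Ncl_rat)
  next
    case (Ncl_gen z)
    then show ?case using F(7) by (auto intro: Ncl.Ncl_gen)
  next
    case (Ncl_add z w)
    then have "\<psi> (z + w) = \<psi> z + \<psi> w" using hom_add[OF subfield_qring[OF F(1)] F(5)] NF by blast
    then show ?case using Ncl_add by (metis Ncl.intros(3))
  next
    case (Ncl_mult z w)
    then have "\<psi> (z * w) = \<psi> z * \<psi> w" using hom_mult[OF subfield_qring[OF F(1)] F(5)] NF by blast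
    then show ?case using Ncl_mult by (metis Ncl.intros(4))
  qed
  then show "y \<in> Ncl S" using x F(6) by blast
qed

lemma delta_arith:
  fixes a b n :: nat
  assumes a: "a \<ge> 1" and b: "b \<ge> 1" and an: "a \<le> n" and bn: "b \<le> n" and nab: "n \<le> a * b"
  defines "d \<equiv> 2 / real n + 1 - 1 / real a - 1 / real b"
  shows "1 / real n \<le> d \<and> d \<le> 1 \<and> (d = 1 \<longleftrightarrow> a = n \<and> b = n) \<and> (d = 1 / real n \<longleftrightarrow> a = 1 \<or> b = 1)"
proof -
  have A: "real a \<ge> 1" and B: "real b \<ge> 1" and N: "real n \<ge> 1" using a b an by auto
  have an': "1 / real n \<le> 1 / real a" using an a by (simp add: frac_le)
  have bn': "1 / real n \<le> 1 / real b" using bn b by (simp add: frac_le)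
  have abn: "1 / (real a * real b) \<le> 1 / real n"
    using nab N by (simp add: frac_le of_nat_mult[symmetric] del: of_nat_mult)
  have prod: "(1 - 1 / real a) * (1 - 1 / real b) \<ge> 0" using A B by simp
  have eqn: "d - 1 / real n = (1 / real n - 1 / (real a * real b)) + (1 - 1 / real a) * (1 - 1 / real b)"
    unfolding d_def using A B by (simp add: field_simps)
  have eq1: "1 - d = (1 / real a - 1 / real n) + (1 / real b - 1 / real n)"
    unfolding d_def by simp
  have 1: "1 / real n \<le> d" using eqn abn prod by linarith
  have 2: "d \<le> 1" using eq1 an' bn' by linarith
  have 3: "d = 1 \<longleftrightarrow> a = n \<and> b = n"
  proof
    assume "d = 1"
    then have "1 / real a = 1 / real n" "1 / real b = 1 / real n" using eq1 an' bn' by linarith+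
    then show "a = n \<and> b = n" using A B N by (simp add: field_simps)
  next
    assume "a = n \<and> b = n" then show "d = 1" unfolding d_def by simp
  qed
  have 4: "d = 1 / real n \<longleftrightarrow> a = 1 \<or> b = 1"
  proof
    assume "d = 1 / real n"
    then have "(1 - 1 / real a) * (1 - 1 / real b) = 0" using eqn abn prod by linarith
    then have "1 / real a = 1 \<or> 1 / real b = 1" by simp
    then show "a = 1 \<or> b = 1" using A B by (auto simp: field_simps)
  next
    assume "a = 1 \<or> b = 1"
    then show "d = 1 / real n"
    proof
      assume "a = 1" then have "n = b" using an bn nab by simp
      then show ?thesis using \<open>a = 1\<close> unfolding d_def by simp
    next
      assume "b = 1" then have "n = a" using an bn nab by simp
      then show ?thesis using \<open>b = 1\<close> unfolding d_def by simp
    qed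
  qed
  show ?thesis using 1 2 3 4 by blast
qed

lemma gc_props:
  shows "is_subfield (galois_closure E)" "normal_over_Q (galois_closure E)" "E \<subseteq> galois_closure E"
    and "is_subfield F \<Longrightarrow> normal_over_Q F \<Longrightarrow> E \<subseteq> F \<Longrightarrow> galois_closure E \<subseteq> F"
  unfolding galois_closure_def
proof -
  show "is_subfield (\<Inter> {F. E \<subseteq> F \<and> is_subfield F \<and> normal_over_Q F})"
    unfolding is_subfield_def by auto
  show "normal_over_Q (\<Inter> {F. E \<subseteq> F \<and> is_subfield F \<and> normal_over_Q F})"
    unfolding normal_over_Q_def by blast
  show "E \<subseteq> \<Inter> {F. E \<subseteq> F \<and> is_subfield F \<and> normal_over_Q F}" by auto
  show "is_subfield F \<Longrightarrow> normal_over_Q F \<Longrightarrow> E \<subseteq> F \<Longrightarrow> \<Inter> {F. E \<subseteq> F \<and> is_subfield F \<and> normal_over_Q F} \<subseteq> F"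
    by auto
qed

lemma comp_props:
  shows "is_subfield (compositum A B)" "A \<subseteq> compositum A B" "B \<subseteq> compositum A B"
    and "is_subfield F \<Longrightarrow> A \<union> B \<subseteq> F \<Longrightarrow> compositum A B \<subseteq> F"
  unfolding compositum_def
proof -
  show "is_subfield (\<Inter> {F. A \<union> B \<subseteq> F \<and> is_subfield F})"
    unfolding is_subfield_def by auto
qed auto

lemma Rats_normal: "normal_over_Q (\<rat> :: complex set)"
  unfolding normal_over_Q_def
proof (intro ballI allI impI)
  fix x y :: complex and p :: "rat poly"
  assume x: "x \<in> \<rat>" and p: "irreducible p \<and> poly (map_poly of_rat p) x = 0"
    and y: "poly (map_poly of_rat p) y = 0"
  obtain r where r: "x = of_rat r" using x by (auto simp: Rats_def)
  have m: "map_poly (of_rat :: rat \<Rightarrow> complex) [:-r, 1:] = [:-of_rat r, 1:]"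
    by (rule poly_eqI) (simp add: coeff_map_poly coeff_pCons of_rat_minus split: nat.split)
  have "p dvd [:-r, 1:]" using irreducible_dvd[of p x "[:-r, 1:]"] p m r by simp
  then obtain c where c: "[:-r, 1:] = p * c" by blast
  have "poly (map_poly of_rat [:-r, 1:]) y = 0" by (subst c) (simp add: ratmap_mult y)
  then have "y = x" using m r by simp
  then show "y \<in> \<rat>" using x by simp
qed

lemma gc_Rats: "galois_closure \<rat> = \<rat>"
proof -
  have "galois_closure \<rat> \<subseteq> \<rat>" using gc_props(4)[OF is_subfield_Rats Rats_normal] by blast
  moreover have "\<rat> \<subseteq> galois_closure \<rat>" using subfield_Rats[OF gc_props(1)] .
  ultimately show ?thesis by blast
qed

lemma nf_props: "number_field K \<Longrightarrow> is_subfield K \<and> fd K"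
  by (auto simp: number_field_def fd_def)

lemma Fpoly_prod: "qring F \<Longrightarrow> (\<And>x. x \<in> A \<Longrightarrow> Fpoly F (g x)) \<Longrightarrow> Fpoly F (prod g A)"
proof (induction A rule: infinite_finite_induct)
  case (infinite A)
  have "Fpoly F [:1:]" using Fpoly_const[OF qring_1[OF infinite(2)] infinite(2)] .
  then show ?case using infinite(1) by (simp add: one_pCons)
next
  case empty
  have "Fpoly F [:1:]" using Fpoly_const[OF qring_1[OF empty(1)] empty(1)] .
  then show ?case by (simp add: one_pCons)
next
  case (insert x A) then show ?case using Fpoly_mult by simp
qed

lemma gc_fd:
  assumes K: "number_field K"
  shows "fd (galois_closure K)"
proof -
  have Ks: "is_subfield K" "fd K" using nf_props[OF K] by auto
  obtain BK where BK: "BK \<subseteq> K" "Q.independent BK" "K \<subseteq> Q.span BK" "card BK = Q.dim K" "finite BK"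
    by (rule fd_basis[OF Ks(2)])
  have alg: "\<exists>g. Fpoly \<rat> g \<and> g \<noteq> 0 \<and> poly g b = 0" if "b \<in> BK" for b
  proof -
    have "\<And>i. b ^ i \<in> K" using qring_power[OF subfield_qring[OF Ks(1)]] that BK(1) by blast
    then show ?thesis by (rule algebraic_fd[OF Ks(2)])
  qed
  define G where "G b = (SOME g. Fpoly \<rat> g \<and> g \<noteq> 0 \<and> poly g b = 0)" for b
  have G: "Fpoly \<rat> (G b) \<and> G b \<noteq> 0 \<and> poly (G b) b = 0" if "b \<in> BK" for b
    unfolding G_def by (rule someI_ex) (rule alg[OF that])
  define f where "f = (\<Prod>b\<in>BK. G b)"
  have Ff: "Fpoly \<rat> f" unfolding f_def using G by (intro Fpoly_prod[OF qring_Rats]) blast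
  have f0: "f \<noteq> 0" unfolding f_def using G prod_zero_iff[OF BK(5), of G] by blast
  define S where "S = {z. poly f z = 0}"
  have BS: "BK \<subseteq> S"
  proof
    fix b assume b: "b \<in> BK"
    have "poly f b = (\<Prod>b'\<in>BK. poly (G b') b)" unfolding f_def by (rule poly_prod)
    also have "\<dots> = 0" using prod_zero_iff[OF BK(5), of "\<lambda>b'. poly (G b') b"] G[OF b] b by blast
    finally show "b \<in> S" by (simp add: S_def)
  qed
  have finS: "finite S" using poly_roots_finite[OF f0] by (simp add: S_def)
  have algS: "\<exists>g. Fpoly \<rat> g \<and> g \<noteq> 0 \<and> poly g s = 0" if "s \<in> S" for s
    using Ff f0 that unfolding S_def by blast
  have N: "is_subfield (Ncl S)" "fd (Ncl S)"
    using Ncl_field[OF finS algS] by auto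
  have nN: "normal_over_Q (Ncl S)" using Ncl_normal[OF Ff f0] unfolding S_def .
  have "BK \<subseteq> Ncl S" using BS Ncl_gen by blast
  then have "Q.span BK \<subseteq> Ncl S" using Q.span_minimal qring_subspace[OF subfield_qring[OF N(1)]] by blast
  then have "K \<subseteq> Ncl S" using BK(3) by blast
  then have "galois_closure K \<subseteq> Ncl S" using gc_props(4)[OF N(1) nN] by blast
  then show ?thesis using fd_subset N(2) by blast
qed

lemma comp_dim:
  assumes F: "is_subfield F" "fd F" and G: "is_subfield G" "fd G"
  shows "fd (compositum F G) \<and> Q.dim (compositum F G) \<le> Q.dim F * Q.dim G"
proof -
  obtain BF where BF: "BF \<subseteq> F" "Q.independent BF" "F \<subseteq> Q.span BF" "card BF = Q.dim F" "finite BF"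
    by (rule fd_basis[OF F(2)])
  obtain BG where BG: "BG \<subseteq> G" "Q.independent BG" "G \<subseteq> Q.span BG" "card BG = Q.dim G" "finite BG"
    by (rule fd_basis[OF G(2)])
  define P where "P = {a * b |a b. a \<in> BF \<and> b \<in> BG}"
  define R where "R = Q.span P"
  have Pimg: "P = (\<lambda>(a, b). a * b) ` (BF \<times> BG)" by (auto simp: P_def)
  have finP: "finite P" using Pimg BF(5) BG(5) by simp
  have cardP: "card P \<le> card BF * card BG"
    using Pimg card_image_le[of "BF \<times> BG" "\<lambda>(a, b). a * b"] BF(5) BG(5) by (simp add: card_cartesian_product)
  have prodR: "x * y \<in> R" if "x \<in> F" "y \<in> G" for x y
    using span_mult[of x BF y BG] that BF(3) BG(3) by (auto simp: R_def P_def)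
  have one: "1 \<in> F" "1 \<in> G" using F(1) G(1) by (auto simp: is_subfield_def)
  have FR: "F \<subseteq> R" using prodR[OF _ one(2)] by auto
  have GR: "G \<subseteq> R" using prodR[OF one(1)] by auto
  have PP: "{p * q |p q. p \<in> P \<and> q \<in> P} \<subseteq> R"
  proof safe
    fix p q assume "p \<in> P" "q \<in> P"
    then obtain a b a' b' where ab: "a \<in> BF" "b \<in> BG" "a' \<in> BF" "b' \<in> BG" "p = a * b" "q = a' * b'"
      by (auto simp: P_def)
    have eq: "p * q = (a * a') * (b * b')" using ab by (simp add: algebra_simps)
    have "a * a' \<in> F" "b * b' \<in> G" using ab(1-4) BF(1) BG(1) F(1) G(1)
      unfolding is_subfield_def by (meson subsetD)+
    then show "p * q \<in> R" using prodR eq by simp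
  qed
  have qR: "qring R"
    unfolding qring_def
  proof (intro conjI ballI)
    show "\<rat> \<subseteq> R" using FR subfield_Rats[OF F(1)] by blast
    fix x y assume "x \<in> R" "y \<in> R"
    then show "x + y \<in> R" unfolding R_def by (rule Q.span_add)
    have "x * y \<in> Q.span {p * q |p q. p \<in> P \<and> q \<in> P}"
      using span_mult \<open>x \<in> R\<close> \<open>y \<in> R\<close> unfolding R_def by blast
    also have "\<dots> \<subseteq> R" using Q.span_minimal[OF PP] R_def by simp
    finally show "x * y \<in> R" .
  qed
  have fdR: "fd R" unfolding fd_def R_def using finP by blast
  have "is_subfield R" using qring_fd_subfield[OF qR fdR] .
  then have CR: "compositum F G \<subseteq> R" using comp_props(4) FR GR by blast
  then have "fd (compositum F G)" using fd_subset[OF fdR] by blast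
  moreover have "Q.dim (compositum F G) \<le> Q.dim R" using dim_mono_fd[OF fdR CR] .
  moreover have "Q.dim R \<le> card P" unfolding R_def using Q.dim_le_card[OF _ finP, of "Q.span P"] by simp
  ultimately show ?thesis using cardP BF(4) BG(4) by simp
qed

lemma gc_dim1_iff:
  assumes K: "number_field K"
  shows "Q.dim (galois_closure K) = 1 \<longleftrightarrow> K = \<rat>"
proof
  assume d: "Q.dim (galois_closure K) = 1"
  have sub: "is_subfield (galois_closure K)" by (rule gc_props(1))
  have "\<rat> \<subseteq> galois_closure K" using subfield_Rats[OF sub] .
  then have "\<rat> = galois_closure K"
    using dim_eq_fd[OF gc_fd[OF K] _ subspace_Rats qring_subspace[OF subfield_qring[OF sub]]] d dim_Rats by simp
  then have "K \<subseteq> \<rat>" using gc_props(3)[of K] by simp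
  moreover have "\<rat> \<subseteq> K" using subfield_Rats nf_props[OF K] by blast
  ultimately show "K = \<rat>" by blast
next
  assume "K = \<rat>"
  then show "Q.dim (galois_closure K) = 1" using gc_Rats dim_Rats by simp
qed

theorem proposition2p12:
  fixes K L :: "complex set"
  assumes "number_field K" and "number_field L"
  shows "1 / real (qdegree (compositum (galois_closure K) (galois_closure L))) \<le> delta K L
       \<and> delta K L \<le> 1
       \<and> (delta K L = 1 \<longleftrightarrow> galois_closure K = galois_closure L)
       \<and> (delta K L = 1 / real (qdegree (compositum (galois_closure K) (galois_closure L)))
            \<longleftrightarrow> K = \<rat> \<or> L = \<rat>)"
proof -
  define GK where "GK = galois_closure K"
  define GL where "GL = galois_closure L"
  define C where "C = compositum GK GL"
  have fK: "fd GK" "is_subfield GK" using gc_fd[OF assms(1)] gc_props(1) by (auto simp: GK_def)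
  have fL: "fd GL" "is_subfield GL" using gc_fd[OF assms(2)] gc_props(1) by (auto simp: GL_def)
  have fC: "fd C" "Q.dim C \<le> Q.dim GK * Q.dim GL" using comp_dim[OF fK(2,1) fL(2,1)] by (auto simp: C_def)
  have sC: "is_subfield C" "GK \<subseteq> C" "GL \<subseteq> C" using comp_props(1,2,3) by (auto simp: C_def)
  have a1: "Q.dim GK \<ge> 1" using dim_pos[OF fK(1), of 1] fK(2) by (auto simp: is_subfield_def)
  have b1: "Q.dim GL \<ge> 1" using dim_pos[OF fL(1), of 1] fL(2) by (auto simp: is_subfield_def)
  have an: "Q.dim GK \<le> Q.dim C" using dim_mono_fd[OF fC(1) sC(2)] .
  have bn: "Q.dim GL \<le> Q.dim C" using dim_mono_fd[OF fC(1) sC(3)] .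
  have spK: "Q.subspace GK" "Q.subspace GL" "Q.subspace C"
    using qring_subspace subfield_qring fK(2) fL(2) sC(1) by auto
  have eqv1: "(Q.dim GK = Q.dim C \<and> Q.dim GL = Q.dim C) \<longleftrightarrow> GK = GL"
  proof
    assume "Q.dim GK = Q.dim C \<and> Q.dim GL = Q.dim C"
    then have "GK = C" "GL = C"
      using dim_eq_fd[OF fC(1) sC(2) spK(1) spK(3)] dim_eq_fd[OF fC(1) sC(3) spK(2) spK(3)] by auto
    then show "GK = GL" by simp
  next
    assume "GK = GL"
    then have "C \<subseteq> GK" using comp_props(4)[OF fK(2), of GK GL] by (auto simp: C_def)
    then have "C = GK" "C = GL" using sC \<open>GK = GL\<close> by auto
    then show "Q.dim GK = Q.dim C \<and> Q.dim GL = Q.dim C" by simp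
  qed
  have eqv2: "(Q.dim GK = 1 \<or> Q.dim GL = 1) \<longleftrightarrow> K = \<rat> \<or> L = \<rat>"
    using gc_dim1_iff[OF assms(1)] gc_dim1_iff[OF assms(2)] by (auto simp: GK_def GL_def)
  have d: "delta K L = 2 / real (Q.dim C) + 1 - 1 / real (Q.dim GK) - 1 / real (Q.dim GL)"
    by (simp add: delta_def qdegree_eq GK_def GL_def C_def)
  have q: "qdegree (compositum (galois_closure K) (galois_closure L)) = Q.dim C"
    by (simp add: qdegree_eq GK_def GL_def C_def)
  show ?thesis
    unfolding q d using delta_arith[OF a1 b1 an bn fC(2)] eqv1 eqv2
    by (simp add: GK_def GL_def)
qed

end
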